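(* Let $0<\phi<\pi/6$, $T>0$, $F,h\in\mathcal A_\phi$, $j\in\{0,1,2,3\}$ and $\nu>2\rho_0+1$. Then for all $p\in\mathcal S_\phi$, $0\le t\le T$, $$\Big|\int_0^t\big\{(p^j[F+h])*B_{j,0}-(p^jF)*B_{j,0}\big\}(p,\tau)\,e^{-p^3(t-\tau)}\,d\tau\Big|\le\frac{C(\phi)T^{(3-j)/3}e^{\nu|p|}}{M_0(1+|p|^2)}\||B_{j,0}|*|h|\|_\nu,$$ with $C(\phi)$ depending only on $\phi$.
   Context: Let $\rho_0>0$; $b_{j,0}(y,t)$ is analytic in $y$ on $\{(y,t):\arg y\in(-2\pi/3,2\pi/3),|y|>\rho_0,0\le t\le T\}$ with $|y^{\alpha_j}b_{j,0}|<A_b(T)$ ($\alpha_j>0$), and $B_{j,0}(p,t)=\frac1{2\pi i}\int_{\mathcal C}e^{py}b_{j,0}(y,t)dy$, $\mathcal C=\{c+ire^{i\phi'\mathrm{sgn}(r)}:r\in\mathbb R\}$, $c$ large, $\phi<\phi'<\pi/6$. $\mathcal S_\phi=\{p:\arg p\in(-\phi,\phi),0<|p|<\infty\}$, $\mathcal K=\overline{\mathcal S_\phi}\times[0,T]$; $\|G\|_\nu=M_0\sup_{\mathcal K}(1+|p|^2)e^{-\nu|p|}|G(p,t)|$ (also for continuous functions on $\mathcal K$), $M_0=\sup_{s\ge0}\frac{2(1+s^2)(\ln(1+s^2)+s\arctan s)}{s(s^2+4)}$; $\mathcal A_\phi$: functions analytic in $p\in\mathcal S_\phi$, continuous on $\overline{\mathcal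 S_\phi}$ for each $t$, with finite norm. $(F*G)(p,t)=\int_0^pF(s,t)G(p-s,t)ds$ along $[0,p]$. For $p=|p|e^{i\theta}$, $(|B|*|h|)(p,t)=\int_0^{|p|}|B(se^{i\theta},t)||h(p-se^{i\theta},t)|ds$. *)

theory Defs
  imports "HOL-Complex_Analysis.Complex_Analysis"
begin

definition sector :: "real \<Rightarrow> complex set" where
  "sector \<phi> = {p. p \<noteq> 0 \<and> -\<phi> < Arg p \<and> Arg p < \<phi>}"

definition Kset :: "real \<Rightarrow> real \<Rightarrow> (complex \<times> real) set" where
  "Kset \<phi> T = closure (sector \<phi>) \<times> {0..T}"

text \<open>The constant M_0 (at s = 0 the quotient is 0 by HOL convention, harmless).\<close>
definition M0 :: real where
  "M0 = Sup {2 * (1 + s\<^sup>2) * (ln (1 + s\<^sup>2) + s * arctan s) / (s * (s\<^sup>2 + 4)) | s. s \<ge> 0}"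

text \<open>The weighted sup norm, valued in [0,\<infinity>] so that an infinite norm is representable.\<close>
definition nnorm_c :: "real \<Rightarrow> real \<Rightarrow> real \<Rightarrow> (complex \<Rightarrow> real \<Rightarrow> complex) \<Rightarrow> ennreal" where
  "nnorm_c \<phi> T \<nu> G = ennreal M0 *
     (SUP pt\<in>Kset \<phi> T. ennreal ((1 + (cmod (fst pt))\<^sup>2) * exp (- \<nu> * cmod (fst pt)) * cmod (G (fst pt) (snd pt))))"

definition nnorm_e :: "real \<Rightarrow> real \<Rightarrow> real \<Rightarrow> (complex \<Rightarrow> real \<Rightarrow> ennreal) \<Rightarrow> ennreal" where
  "nnorm_e \<phi> T \<nu> G = ennreal M0 *
     (SUP pt\<in>Kset \<phi> T. ennreal ((1 + (cmod (fst pt))\<^sup>2) * exp (- \<nu> * cmod (fst pt))) * G (fst pt) (snd pt))"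

definition A_space :: "real \<Rightarrow> real \<Rightarrow> real \<Rightarrow> (complex \<Rightarrow> real \<Rightarrow> complex) set" where
  "A_space \<phi> T \<nu> = {G. (\<forall>t\<in>{0..T}. (\<lambda>p. G p t) holomorphic_on sector \<phi>
                                  \<and> continuous_on (closure (sector \<phi>)) (\<lambda>p. G p t))
                      \<and> nnorm_c \<phi> T \<nu> G < \<infinity>}"

definition lconv :: "(complex \<Rightarrow> real \<Rightarrow> complex) \<Rightarrow> (complex \<Rightarrow> real \<Rightarrow> complex) \<Rightarrow> complex \<Rightarrow> real \<Rightarrow> complex" where
  "lconv F G p t = contour_integral (linepath 0 p) (\<lambda>s. F s t * G (p - s) t)"

definition abs_conv :: "(complex \<Rightarrow> real \<Rightarrow> complex) \<Rightarrow> (complex \<Rightarrow> real \<Rightarrow> complex) \<Rightarrow> complex \<Rightarrow> real \<Rightarrow> ennreal" where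
  "abs_conv B h p t = (\<integral>\<^sup>+ s\<in>{0..cmod p}.
      ennreal (cmod (B (of_real s * cis (Arg p)) t) * cmod (h (p - of_real s * cis (Arg p)) t)) \<partial>lborel)"

text \<open>Contour C = {c + i r e^{i phi' sgn r} : r real}, parametrised by r, with dy = i e^{i phi' sgn r} dr.\<close>
definition contC :: "real \<Rightarrow> real \<Rightarrow> real \<Rightarrow> complex" where
  "contC c \<phi>' r = of_real c + \<i> * of_real r * cis (\<phi>' * sgn r)"

definition Bfun :: "(complex \<Rightarrow> real \<Rightarrow> complex) \<Rightarrow> real \<Rightarrow> real \<Rightarrow> complex \<Rightarrow> real \<Rightarrow> complex" where
  "Bfun b c \<phi>' p t = 1 / (2 * of_real pi * \<i>) *
     (\<integral>r. exp (p * contC c \<phi>' r) * b (contC c \<phi>' r) t * (\<i> * cis (\<phi>' * sgn r)) \<partial>lborel)"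

definition bdom :: "real \<Rightarrow> complex set" where
  "bdom \<rho>0 = {y. -2*pi/3 < Arg y \<and> Arg y < 2*pi/3 \<and> cmod y > \<rho>0}"

end

theory Submission
  imports Defs
begin


lemma Arg_bound_geom:
  fixes y :: complex
  assumes "y \<noteq> 0" "sqrt 3 * Re y + \<bar>Im y\<bar> > 0"
  shows "-2*pi/3 < Arg y \<and> Arg y < 2*pi/3"
proof (rule ccontr)
  assume "\<not> ?thesis"
  hence ab: "2*pi/3 \<le> \<bar>Arg y\<bar>" by auto
  have "\<bar>Arg y\<bar> \<le> pi" using Arg_bounded[of y] by auto
  hence "cos \<bar>Arg y\<bar> \<le> cos (2*pi/3)" using ab by (intro cos_monotone_0_pi_le) auto
  moreover have "cos (2*pi/3) = -1/2"
  proof -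
    have "cos (2*pi/3) = cos (pi - pi/3)" by (simp add: field_simps)
    also have "\<dots> = - cos (pi/3)" by (simp only: cos_diff) simp
    finally show ?thesis by (simp add: cos_60)
  qed
  ultimately have c: "cos (Arg y) \<le> -1/2" by simp
  have y: "Re y = cmod y * cos (Arg y)" "Im y = cmod y * sin (Arg y)"
    using rcis_cmod_Arg[of y] by (metis Re_rcis, metis Im_rcis)
  have n: "cmod y > 0" using assms by simp
  have "cmod y * cos (Arg y) \<le> cmod y * (-1/2)" using c n by (intro mult_left_mono) auto
  hence r: "Re y \<le> - cmod y / 2" using y(1) by simp
  have "(Im y)^2 = (cmod y)^2 - (Re y)^2" by (simp add: cmod_power2)
  also have "\<dots> \<le> 3 * (Re y)^2" proof -
    have "(cmod y)^2 \<le> (-2*Re y)^2" using r n by (intro power_mono) auto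
    thus ?thesis by (simp add: power_mult_distrib)
  qed
  finally have "(Im y)^2 \<le> (sqrt 3 * Re y)^2" by (simp add: power_mult_distrib)
  hence "\<bar>Im y\<bar> \<le> \<bar>sqrt 3 * Re y\<bar>" using abs_le_square_iff by blast
  moreover have "Re y \<le> 0" using r n by linarith
  hence "sqrt 3 * Re y \<le> 0" by (simp add: mult_nonneg_nonpos)
  ultimately show False using assms(2) by linarith
qed


lemma contC_parts:
  "Re (contC c \<phi>' r) = c - \<bar>r\<bar> * sin \<phi>'" "Im (contC c \<phi>' r) = r * cos \<phi>'"
  by (cases "r > 0"; cases "r < 0"; simp add: contC_def cis.ctr sgn_if)+

lemma aux_alg: "(X::real)^2 = r^2 \<Longrightarrow> sn^2 + co^2 = 1 \<Longrightarrow> (c - X * sn)^2 + (r * co)^2 = (c * co)^2 + (c * sn - X)^2"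
  by algebra

lemma contC_in_bdom:
  assumes "0 < \<phi>'" "\<phi>' < pi/6" "c * cos \<phi>' > \<rho>0" "\<rho>0 > 0"
  shows "contC c \<phi>' r \<in> bdom \<rho>0"
proof -
  let ?y = "contC c \<phi>' r"
  have s: "sin \<phi>' < 1/2"
  proof -
    have "sin \<phi>' < sin (pi/6)" using assms by (intro sin_monotone_2pi) auto
    thus ?thesis by (simp add: sin_30)
  qed
  have co: "cos \<phi>' > sqrt 3 / 2"
  proof -
    have "cos (pi/6) < cos \<phi>'" using assms by (intro cos_monotone_0_pi) auto
    thus ?thesis by (simp add: cos_30)
  qed
  have sp: "sin \<phi>' > 0" using assms by (intro sin_gt_zero) auto
  have "sqrt 3 / 2 > (0::real)" by simp
  hence cpos: "cos \<phi>' > 0" using co by linarith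
  have c0: "c > 0"
  proof (rule ccontr)
    assume "\<not> c > 0" hence "c * cos \<phi>' \<le> 0" using cpos by (simp add: mult_nonpos_nonneg)
    thus False using assms by linarith
  qed
  have k: "sqrt 3 * sin \<phi>' < cos \<phi>'"
  proof -
    have "sqrt 3 * sin \<phi>' \<le> sqrt 3 * (1/2)" using s by (intro mult_left_mono) auto
    hence "sqrt 3 * sin \<phi>' \<le> sqrt 3 / 2" by simp
    thus ?thesis using co by linarith
  qed
  have "(cmod ?y)^2 = (c - \<bar>r\<bar> * sin \<phi>')^2 + (r * cos \<phi>')^2"
    by (simp add: cmod_power2 contC_parts)
  also have "\<dots> = (c * cos \<phi>')^2 + (c * sin \<phi>' - \<bar>r\<bar>)^2"
    by (rule aux_alg) (simp_all add: power2_abs)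
  finally have "(cmod ?y)^2 \<ge> (c * cos \<phi>')^2" by simp
  hence "cmod ?y \<ge> c * cos \<phi>'" using c0 cpos by (metis abs_le_square_iff abs_of_nonneg norm_ge_zero mult_pos_pos less_imp_le)
  hence m: "cmod ?y > \<rho>0" using assms by linarith
  hence y0: "?y \<noteq> 0" using assms by auto
  have "sqrt 3 * Re ?y + \<bar>Im ?y\<bar> = sqrt 3 * c + \<bar>r\<bar> * (cos \<phi>' - sqrt 3 * sin \<phi>')"
    using cpos by (simp add: contC_parts abs_mult algebra_simps)
  also have "\<dots> > 0" using k c0 by (intro add_pos_nonneg) auto
  finally have "-2*pi/3 < Arg ?y \<and> Arg ?y < 2*pi/3" using Arg_bound_geom y0 by blast
  with m show ?thesis unfolding bdom_def by auto
qed


lemma contC_cont_pos: "continuous_on {0<..} (contC c \<phi>')"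
proof -
  have "continuous_on {0<..} (\<lambda>r. of_real c + \<i> * of_real r * cis \<phi>')"
    by (intro continuous_intros)
  thus ?thesis by (rule continuous_on_cong[THEN iffD1, rotated 2]) (auto simp: contC_def)
qed

lemma contC_cont_neg: "continuous_on {..<0} (contC c \<phi>')"
proof -
  have "continuous_on {..<0} (\<lambda>r. of_real c + \<i> * of_real r * cis (- \<phi>'))"
    by (intro continuous_intros)
  thus ?thesis by (rule continuous_on_cong[THEN iffD1, rotated 2]) (auto simp: contC_def)
qed

lemma b_contC_meas:
  assumes hol: "(\<lambda>y. b y \<tau>) holomorphic_on bdom \<rho>0"
    and a: "0 < \<phi>'" "\<phi>' < pi/6" "c * cos \<phi>' > \<rho>0" "\<rho>0 > 0"
  shows "(\<lambda>r. b (contC c \<phi>' r) \<tau>) \<in> borel_measurable borel"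
proof -
  let ?g = "\<lambda>r. b (contC c \<phi>' r) \<tau>"
  have cb: "continuous_on (bdom \<rho>0) (\<lambda>y. b y \<tau>)" using hol holomorphic_on_imp_continuous_on by blast
  have sub: "contC c \<phi>' ` S \<subseteq> bdom \<rho>0" for S using contC_in_bdom[OF a] by auto
  have m1: "(\<lambda>r. indicator {0<..} r *\<^sub>R ?g r) \<in> borel_measurable borel"
    by (rule borel_measurable_continuous_on_indicator) (auto intro: continuous_on_compose2[OF cb contC_cont_pos sub])
  have m2: "(\<lambda>r. indicator {..<0} r *\<^sub>R ?g r) \<in> borel_measurable borel"
    by (rule borel_measurable_continuous_on_indicator) (auto intro: continuous_on_compose2[OF cb contC_cont_neg sub])
  have m3: "(\<lambda>r. indicator {0::real} r *\<^sub>R ?g 0) \<in> borel_measurable borel"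
    by (intro borel_measurable_scaleR borel_measurable_const borel_measurable_indicator borel_closed closed_singleton)
  have eq: "?g r = indicator {0<..} r *\<^sub>R ?g r + indicator {..<0} r *\<^sub>R ?g r + indicator {0} r *\<^sub>R ?g 0" for r
    by (cases "r > 0"; cases "r < 0") (auto simp: indicator_def)
  show ?thesis by (subst eq) (intro borel_measurable_add m1 m2 m3)
qed

lemma cis_sgn_meas: "(\<lambda>x::real. cis (\<phi>' * sgn x)) \<in> borel_measurable borel"
proof -
  have "(\<lambda>x::real. cis (\<phi>' * sgn x)) = (\<lambda>x. if x > 0 then cis \<phi>' else if x < 0 then cis (-\<phi>') else 1)"
    by (rule ext) (auto simp: sgn_if)
  moreover have "(\<lambda>x::real. if x > 0 then cis \<phi>' else if x < 0 then cis (-\<phi>') else 1) \<in> borel_measurable borel"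
    by measurable
  ultimately show ?thesis by simp
qed

lemma contC_meas: "contC c \<phi>' \<in> borel_measurable borel"
  unfolding contC_def using cis_sgn_meas[of \<phi>'] by measurable

lemma Bfun_meas:
  assumes hol: "(\<lambda>y. b y \<tau>) holomorphic_on bdom \<rho>0"
    and a: "0 < \<phi>'" "\<phi>' < pi/6" "c * cos \<phi>' > \<rho>0" "\<rho>0 > 0"
  shows "(\<lambda>q. Bfun b c \<phi>' q \<tau>) \<in> borel_measurable borel"
proof -
  note [measurable] = b_contC_meas[of b \<tau> \<rho>0 \<phi>' c, OF hol a] contC_meas cis_sgn_meas
  have "(\<lambda>q. \<integral>r. exp (q * contC c \<phi>' r) * b (contC c \<phi>' r) \<tau> * (\<i> * cis (\<phi>' * sgn r)) \<partial>lborel) \<in> borel_measurable borel"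
    by (rule lborel.borel_measurable_lebesgue_integral) measurable
  thus ?thesis unfolding Bfun_def by measurable
qed


lemma seg_mem: "0 \<le> u \<Longrightarrow> u \<le> 1 \<Longrightarrow> of_real u * p \<in> closed_segment 0 (p::complex)"
  unfolding closed_segment_def by (auto simp: scaleR_conv_of_real)

lemma pw_core:
  fixes H Bq :: "complex \<Rightarrow> complex" and p :: complex and j :: nat
  assumes p0: "p \<noteq> 0"
    and Hc: "continuous_on (closed_segment 0 p) H"
    and Bm: "Bq \<in> borel_measurable borel"
  defines "I \<equiv> (\<integral>\<^sup>+ s\<in>{0..cmod p}. ennreal (cmod (Bq (of_real s * cis (Arg p))) * cmod (H (p - of_real s * cis (Arg p)))) \<partial>lborel)"
  defines "W \<equiv> (\<lambda>x::real. (of_real x * p) ^ j * H (of_real x * p) * Bq (p - of_real x * p) * p)"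
  shows "(\<integral>\<^sup>+x. ennreal (norm (indicator {0..1} x *\<^sub>R W x)) \<partial>lborel) \<le> ennreal (cmod p ^ j) * I"
    and "set_borel_measurable lborel {0..1} W"
proof -
  define R where "R = cmod p"
  define e where "e = cis (Arg p)"
  have R0: "R > 0" using p0 by (simp add: R_def)
  have pe: "p = of_real R * e" unfolding R_def e_def using rcis_cmod_Arg[of p] by (simp add: rcis_def)
  have ne: "cmod e = 1" by (simp add: e_def)
  have hx: "(\<lambda>x. indicator {0..1} x *\<^sub>R H (of_real x * p)) \<in> borel_measurable borel"
  proof (rule borel_measurable_continuous_on_indicator)
    show "continuous_on {0..1} (\<lambda>x. H (of_real x * p))"
      by (rule continuous_on_compose2[OF Hc]) (auto intro!: continuous_intros seg_mem)
  qed simp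
  have hs: "(\<lambda>s. indicator {0..R} s *\<^sub>R H (p - of_real s * e)) \<in> borel_measurable borel"
  proof (rule borel_measurable_continuous_on_indicator)
    have "p - of_real s * e = of_real ((R - s) / R) * p" for s
    proof -
      have "of_real ((R - s) / R) * p = of_real ((R - s) / R) * of_real R * e" by (simp add: pe)
      also have "\<dots> = of_real ((R - s) / R * R) * e" by simp
      also have "(R - s) / R * R = R - s" using R0 by simp
      finally have h2: "of_real ((R - s) / R) * p = of_real (R - s) * e" .
      have h1: "p - of_real s * e = of_real (R - s) * e" by (simp add: pe algebra_simps)
      show ?thesis by (simp only: h1 h2)
    qed
    hence eqf: "(\<lambda>s. H (p - of_real s * e)) = (\<lambda>s. H (of_real ((R - s) / R) * p))" by simp
    have sub: "(\<lambda>s. of_real ((R - s) / R) * p) ` {0..R} \<subseteq> closed_segment 0 p"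
    proof (rule image_subsetI)
      fix s assume "s \<in> {0..R}"
      thus "of_real ((R - s) / R) * p \<in> closed_segment 0 p" using R0 by (intro seg_mem) auto
    qed
    have "continuous_on {0..R} (\<lambda>s. H (of_real ((R - s) / R) * p))"
      by (rule continuous_on_compose2[OF Hc _ sub]) (intro continuous_intros, use R0 in auto)
    thus "continuous_on {0..R} (\<lambda>s. H (p - of_real s * e))" by (simp only: eqf)
  qed simp
  note [measurable] = hx hs Bm
  define G where "G = (\<lambda>s. ennreal (cmod (Bq (of_real s * e)) * cmod (indicator {0..R} s *\<^sub>R H (p - of_real s * e))))"
  have Gm[measurable]: "G \<in> borel_measurable borel" unfolding G_def by measurable
  have IG: "I = (\<integral>\<^sup>+ s. G s \<partial>lborel)"
    unfolding I_def G_def R_def[symmetric] e_def[symmetric]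
    by (intro nn_integral_cong) (auto simp: indicator_def)
  have aff: "(\<integral>\<^sup>+ s. G s \<partial>lborel) = ennreal R * (\<integral>\<^sup>+ x. G (R + (-R) * x) \<partial>lborel)"
    using nn_integral_real_affine[OF Gm, of "-R" R] R0 by simp
  have pt: "ennreal (norm (indicator {0..1} x *\<^sub>R W x)) \<le> ennreal (R^(j+1)) * G (R + (-R) * x)" for x
  proof (cases "x \<in> {0..1}")
    case False thus ?thesis by simp
  next
    case True
    hence x: "0 \<le> x" "x \<le> 1" by auto
    have a1: "p - of_real x * p = of_real (R + (-R) * x) * e" by (simp add: pe algebra_simps)
    have a2: "of_real x * p = p - of_real (R + (-R) * x) * e" by (simp add: pe algebra_simps)
    have inR: "R + (-R) * x \<in> {0..R}" using x R0 by (auto simp: mult_le_cancel_left1 algebra_simps)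
    have "norm (indicator {0..1} x *\<^sub>R W x) = (x * R)^j * cmod (H (of_real x * p)) * cmod (Bq (p - of_real x * p)) * R"
      using True x by (simp add: W_def norm_mult norm_power R_def abs_of_nonneg)
    also have "\<dots> \<le> R^j * cmod (H (of_real x * p)) * cmod (Bq (p - of_real x * p)) * R"
      using x R0 by (intro mult_right_mono power_mono) (auto simp: mult_le_cancel_right1)
    also have "\<dots> = R^(j+1) * (cmod (Bq (of_real (R + (-R) * x) * e)) * cmod (indicator {0..R} (R + (-R) * x) *\<^sub>R H (p - of_real (R + (-R) * x) * e)))"
    proof -
      have q1: "H (of_real x * p) = H (p - of_real (R + (-R) * x) * e)" by (simp only: a2)
      have q2: "Bq (p - of_real x * p) = Bq (of_real (R + (-R) * x) * e)" by (simp only: a1)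
      have q3: "indicator {0..R} (R + (-R) * x) = (1::real)" using inR by simp
      show ?thesis unfolding q1 q2 q3 by simp
    qed
    finally show ?thesis unfolding G_def using R0 by (simp add: ennreal_mult[symmetric] ennreal_leI)
  qed
  have "(\<integral>\<^sup>+x. ennreal (norm (indicator {0..1} x *\<^sub>R W x)) \<partial>lborel) \<le> (\<integral>\<^sup>+x. ennreal (R^(j+1)) * G (R + (-R) * x) \<partial>lborel)"
    by (intro nn_integral_mono pt)
  also have "\<dots> = ennreal (R^(j+1)) * (\<integral>\<^sup>+x. G (R + (-R) * x) \<partial>lborel)"
    by (rule nn_integral_cmult) measurable
  also have "\<dots> = ennreal (R^j) * I"
    using R0 by (simp add: IG aff ennreal_mult mult.assoc mult.left_commute)
  finally show "(\<integral>\<^sup>+x. ennreal (norm (indicator {0..1} x *\<^sub>R W x)) \<partial>lborel) \<le> ennreal (cmod p ^ j) * I"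
    by (simp add: R_def)
  have "(\<lambda>x. indicator {0..1} x *\<^sub>R W x) = (\<lambda>x. (indicator {0..1} x *\<^sub>R H (of_real x * p)) * ((of_real x * p) ^ j * Bq (p - of_real x * p) * p))"
    by (rule ext) (simp add: W_def indicator_def)
  moreover have "(\<lambda>x. (indicator {0..1} x *\<^sub>R H (of_real x * p)) * ((of_real x * p) ^ j * Bq (p - of_real x * p) * p)) \<in> borel_measurable lborel"
    by measurable
  ultimately show "set_borel_measurable lborel {0..1} W" unfolding set_borel_measurable_def by simp
qed


lemma pw_diff:
  fixes H F Bq :: "complex \<Rightarrow> complex" and p :: complex and j :: nat
  assumes p0: "p \<noteq> 0"
    and Hc: "continuous_on (closed_segment 0 p) H"
    and Bm: "Bq \<in> borel_measurable borel"
  shows "ennreal (cmod (contour_integral (linepath 0 p) (\<lambda>s. s ^ j * (F s + H s) * Bq (p - s))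
           - contour_integral (linepath 0 p) (\<lambda>s. s ^ j * F s * Bq (p - s))))
         \<le> ennreal (cmod p ^ j) * (\<integral>\<^sup>+ s\<in>{0..cmod p}. ennreal (cmod (Bq (of_real s * cis (Arg p))) * cmod (H (p - of_real s * cis (Arg p)))) \<partial>lborel)"
    (is "?L \<le> ennreal ?c * ?I")
proof (cases "?I = top")
  case True
  have "?c > 0" using p0 by simp
  thus ?thesis using True by (simp add: ennreal_mult_top)
next
  case False
  define W where "W \<equiv> (\<lambda>x::real. (of_real x * p) ^ j * H (of_real x * p) * Bq (p - of_real x * p) * p)"
  note pc = pw_core[OF p0 Hc Bm, of j, folded W_def]
  have int: "integrable lborel (\<lambda>x. indicator {0..1} x *\<^sub>R W x)"
  proof (rule integrableI_bounded)
    show "(\<lambda>x. indicator {0..1} x *\<^sub>R W x) \<in> borel_measurable lborel"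
      using pc(2) unfolding set_borel_measurable_def W_def by simp
    have "ennreal ?c * ?I < top" using False by (simp add: ennreal_mult_less_top top.not_eq_extremum)
    thus "(\<integral>\<^sup>+x. ennreal (norm (indicator {0..1} x *\<^sub>R W x)) \<partial>lborel) < \<infinity>"
      using pc(1) unfolding W_def infinity_ennreal_def by (meson le_less_trans)
  qed
  hence si: "set_integrable lborel {0..1} W" unfolding set_integrable_def .
  note eqs = set_borel_integral_eq_integral[OF si]
  let ?w = "\<lambda>s. s ^ j * H s * Bq (p - s)"
  have "(\<lambda>x. ?w (linepath 0 p x) * (p - 0)) = W"
    by (rule ext) (simp add: W_def linepath_def scaleR_conv_of_real)
  hence wi: "(?w has_contour_integral integral {0..1} W) (linepath 0 p)"
    using eqs(1) by (simp add: has_contour_integral_linepath has_integral_integral)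
  have nb: "ennreal (cmod (integral {0..1} W)) \<le> ennreal ?c * ?I"
  proof -
    have "ennreal (cmod (integral {0..1} W)) = ennreal (norm (LINT x:{0..1}|lborel. W x))"
      using eqs(2) by simp
    also have "\<dots> \<le> (\<integral>\<^sup>+x. ennreal (norm (indicator {0..1} x *\<^sub>R W x)) \<partial>lborel)"
      unfolding set_lebesgue_integral_def by (rule integral_norm_bound_ennreal[OF int])
    also have "\<dots> \<le> ennreal ?c * ?I" using pc(1) unfolding W_def by simp
    finally show ?thesis .
  qed
  show ?thesis
  proof (cases "(\<lambda>s. s ^ j * (F s + H s) * Bq (p - s)) contour_integrable_on (linepath 0 p)")
    case True
    have ev: "(\<lambda>s. s ^ j * F s * Bq (p - s)) = (\<lambda>s. s ^ j * (F s + H s) * Bq (p - s) - ?w s)"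
      by (rule ext) (simp add: algebra_simps)
    have vi: "(\<lambda>s. s ^ j * F s * Bq (p - s)) contour_integrable_on (linepath 0 p)"
      unfolding ev using True wi by (intro contour_integrable_diff) (auto simp: contour_integrable_on_def)
    have "contour_integral (linepath 0 p) (\<lambda>s. s ^ j * (F s + H s) * Bq (p - s))
           - contour_integral (linepath 0 p) (\<lambda>s. s ^ j * F s * Bq (p - s)) = contour_integral (linepath 0 p) ?w"
      unfolding ev using True wi
      by (subst contour_integral_diff) (auto simp: contour_integrable_on_def)
    also have "\<dots> = integral {0..1} W" using wi by (rule contour_integral_unique)
    finally show ?thesis using nb by simp
  next
    case False
    have nv: "\<not> (\<lambda>s. s ^ j * F s * Bq (p - s)) contour_integrable_on (linepath 0 p)"
    proof
      assume a: "(\<lambda>s. s ^ j * F s * Bq (p - s)) contour_integrable_on (linepath 0 p)"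
      have eu: "(\<lambda>s. s ^ j * (F s + H s) * Bq (p - s)) = (\<lambda>s. s ^ j * F s * Bq (p - s) + ?w s)"
        by (rule ext) (simp add: algebra_simps)
      have "(\<lambda>s. s ^ j * (F s + H s) * Bq (p - s)) contour_integrable_on (linepath 0 p)"
        unfolding eu using a wi by (intro contour_integrable_add) (auto simp: contour_integrable_on_def)
      with False show False by simp
    qed
    show ?thesis using False nv by (simp add: not_integrable_contour_integral)
  qed
qed


lemma M0_pos: "M0 > 0"
proof -
  define f where "f = (\<lambda>s::real. 2 * (1 + s\<^sup>2) * (ln (1 + s\<^sup>2) + s * arctan s) / (s * (s\<^sup>2 + 4)))"
  have bd: "f s \<le> 8" if "s \<ge> 0" for s
  proof (cases "s = 0")
    case True thus ?thesis by (simp add: f_def)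
  next
    case False
    hence s: "s > 0" using that by simp
    have p1: "0 < 1 + s\<^sup>2" by (metis add_pos_nonneg zero_less_one zero_le_power2)
    have "ln (1 + s\<^sup>2) \<le> ln ((1 + s)^2)" using s p1 by (intro ln_mono) (auto simp: power2_eq_square algebra_simps)
    also have "\<dots> = 2 * ln (1 + s)" using s by (simp add: ln_realpow)
    also have "\<dots> \<le> 2 * s" using ln_add_one_self_le_self[of s] s by simp
    finally have l: "ln (1 + s\<^sup>2) \<le> 2 * s" .
    have "arctan s \<le> 2" using arctan_ubound[of s] pi_less_4 by linarith
    hence "s * arctan s \<le> s * 2" using s by (intro mult_left_mono) auto
    hence num: "ln (1 + s\<^sup>2) + s * arctan s \<le> 4 * s" using l by linarith
    have "2 * (1 + s\<^sup>2) * (ln (1 + s\<^sup>2) + s * arctan s) \<le> 2 * (1 + s\<^sup>2) * (4 * s)"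
      using num by (intro mult_left_mono) auto
    also have "\<dots> \<le> 8 * (s * (s\<^sup>2 + 4))" using s by (simp add: algebra_simps power2_eq_square)
    finally have nn: "2 * (1 + s\<^sup>2) * (ln (1 + s\<^sup>2) + s * arctan s) \<le> 8 * (s * (s\<^sup>2 + 4))" .
    have dp: "s * (s\<^sup>2 + 4) > 0" using s by (simp add: add_nonneg_pos)
    show ?thesis unfolding f_def using nn dp by (simp add: pos_divide_le_eq)
  qed
  have S: "M0 = Sup {f s | s. s \<ge> 0}" unfolding M0_def f_def by simp
  have bdd: "bdd_above {f s | s. s \<ge> 0}" using bd by (auto intro!: bdd_aboveI[of _ 8])
  have "f 1 \<le> M0" unfolding S by (rule cSup_upper) (use bdd in auto)
  moreover have "f 1 > 0"
  proof -
    have "ln (1 + (1::real)\<^sup>2) > 0" by simp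
    moreover have "arctan (1::real) > 0" by (simp add: arctan_one)
    moreover have l2: "ln (2::real) > 0" by simp
    ultimately show ?thesis unfolding f_def using pi_gt_zero by (simp add: arctan_one add_pos_pos)
  qed
  ultimately show ?thesis by simp
qed

lemma exp_integral:
  fixes a t :: real
  assumes a: "a > 0" and t: "t \<ge> 0"
  shows "((\<lambda>\<tau>. exp (-a * (t - \<tau>))) has_integral ((1 - exp (-a * t)) / a)) {0..t}"
proof -
  have "((\<lambda>\<tau>. exp (-a * (t - \<tau>))) has_integral ((\<lambda>\<tau>. exp (-a * (t - \<tau>)) / a) t - (\<lambda>\<tau>. exp (-a * (t - \<tau>)) / a) 0)) {0..t}"
  proof (rule fundamental_theorem_of_calculus[OF t])
    fix x assume "x \<in> {0..t}"
    show "((\<lambda>\<tau>. exp (-a * (t - \<tau>)) / a) has_vector_derivative exp (-a * (t - x))) (at x within {0..t})"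
      unfolding has_real_derivative_iff_has_vector_derivative[symmetric] using a
      by (auto intro!: derivative_eq_intros simp: field_simps)
  qed
  thus ?thesis by (simp add: diff_divide_distrib)
qed

lemma time_factor:
  fixes k R t T :: real and j :: nat
  assumes k: "0 < k" "k \<le> 1" and R: "R > 0" and t: "0 \<le> t" "t \<le> T" and j: "j \<le> 3"
  shows "R ^ j * ((1 - exp (-(k * R^3) * t)) / (k * R^3)) \<le> T powr ((3 - real j) / 3) / k"
proof -
  define \<beta> where "\<beta> = real j / 3"
  have b: "0 \<le> \<beta>" "\<beta> \<le> 1" using j by (auto simp: \<beta>_def)
  have e1: "(3 - real j) / 3 = 1 - \<beta>" by (simp add: \<beta>_def field_simps)
  have T0: "T \<ge> 0" using t by simp
  have Rj: "R ^ j = (R^3) powr \<beta>"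
  proof -
    have r3: "R powr (real 3) = R^3" using R by (rule powr_realpow)
    have rj: "R powr (real j) = R^j" using R by (rule powr_realpow)
    have "(R^3) powr \<beta> = R powr (real 3 * \<beta>)" by (simp only: r3[symmetric] powr_powr)
    also have "real 3 * \<beta> = real j" by (simp add: \<beta>_def)
    finally show ?thesis using rj by simp
  qed
  have a0: "k * R^3 > 0" using k R by simp
  have i1: "(1 - exp (-(k * R^3) * t)) / (k * R^3) \<le> t"
  proof -
    have "1 - exp (-(k * R^3) * t) \<le> (k * R^3) * t" using exp_ge_add_one_self[of "-(k * R^3) * t"] by simp
    thus ?thesis using a0 by (simp add: divide_le_eq mult.commute)
  qed
  have i0: "0 \<le> (1 - exp (-(k * R^3) * t)) / (k * R^3)"
    using a0 t by (intro divide_nonneg_pos) auto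
  have i2: "(1 - exp (-(k * R^3) * t)) / (k * R^3) \<le> 1 / (k * R^3)"
    using a0 by (intro divide_right_mono) auto
  have kb: "(1/k) powr \<beta> \<le> 1/k"
    using powr_mono[of \<beta> 1 "1/k"] b k by simp
  show ?thesis
  proof (cases "k * R^3 * T \<le> 1")
    case True
    show ?thesis
    proof (cases "T = 0")
      case True
      hence "t = 0" using t by simp
      thus ?thesis using True by simp
    next
      case False
      hence T: "T > 0" using T0 by simp
      have "R^3 \<le> 1 / (k * T)" using True k T by (simp add: field_simps)
      hence "(R^3) powr \<beta> \<le> (1 / (k * T)) powr \<beta>" using b R by (intro powr_mono2) auto
      hence "R ^ j \<le> (1/k) powr \<beta> * (1/T) powr \<beta>" using Rj k T by (simp add: powr_mult[symmetric])
      hence "R ^ j * ((1 - exp (-(k * R^3) * t)) / (k * R^3)) \<le> ((1/k) powr \<beta> * (1/T) powr \<beta>) * T"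
        using i1 i0 t by (intro mult_mono) auto
      also have "\<dots> = (1/k) powr \<beta> * T powr (1 - \<beta>)"
        using T by (simp add: powr_diff powr_divide field_simps)
      also have "\<dots> \<le> (1/k) * T powr (1 - \<beta>)" using kb by (intro mult_right_mono) auto
      finally show ?thesis by (simp add: e1)
    qed
  next
    case False
    hence T: "T > 0" using T0 a0 by (cases "T = 0") auto
    have lt: "1 / R^3 < k * T" using False R by (simp add: field_simps)
    have "R ^ j * ((1 - exp (-(k * R^3) * t)) / (k * R^3)) \<le> R ^ j * (1 / (k * R^3))"
      using i2 R by (intro mult_left_mono) auto
    also have "\<dots> = (R^3) powr \<beta> / R^3 / k" using Rj by simp
    also have "(R^3) powr \<beta> / R^3 = (1 / R^3) powr (1 - \<beta>)"
      using R by (simp add: powr_diff powr_divide)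
    finally have A: "R ^ j * ((1 - exp (-(k * R^3) * t)) / (k * R^3)) \<le> (1 / R^3) powr (1 - \<beta>) / k" .
    have "(1 / R^3) powr (1 - \<beta>) \<le> (k * T) powr (1 - \<beta>)"
      using lt b R by (intro powr_mono2) auto
    also have "(k * T) powr (1 - \<beta>) = k powr (1 - \<beta>) * T powr (1 - \<beta>)"
      using k T by (simp add: powr_mult)
    also have "\<dots> \<le> T powr (1 - \<beta>)"
      using k b by (intro mult_left_le_one_le powr_le1) auto
    finally have B: "(1 / R^3) powr (1 - \<beta>) \<le> T powr (1 - \<beta>)" .
    have "(1 / R^3) powr (1 - \<beta>) / k \<le> T powr (1 - \<beta>) / k"
      using B k by (intro divide_right_mono) auto
    with A show ?thesis by (simp add: e1)
  qed
qed


lemma seg_in_closure_sector: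
  assumes "p \<in> sector \<phi>"
  shows "closed_segment 0 p \<subseteq> closure (sector \<phi>)"
proof -
  have p0: "p \<noteq> 0" using assms by (simp add: sector_def)
  have "open_segment 0 p \<subseteq> sector \<phi>"
  proof
    fix x assume x: "x \<in> open_segment 0 p"
    then obtain u where u: "0 \<le> u" "u \<le> 1" "x = u *\<^sub>R p" and x0: "x \<noteq> 0"
      unfolding open_segment_def closed_segment_def by auto
    have "u > 0" using u x0 by (cases "u = 0") auto
    hence "Arg x = Arg p" using u by (simp add: scaleR_conv_of_real)
    thus "x \<in> sector \<phi>" using assms x0 by (simp add: sector_def)
  qed
  hence "closure (open_segment 0 p) \<subseteq> closure (sector \<phi>)" by (rule closure_mono)
  thus ?thesis using p0 by simp
qed

lemma Re_cube_bound:
  assumes "p \<in> sector \<phi>" "0 < \<phi>" "\<phi> < pi/6"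
  shows "Re (p ^ 3) \<ge> cos (3 * \<phi>) * cmod p ^ 3"
proof -
  have a: "-\<phi> < Arg p" "Arg p < \<phi>" using assms(1) by (auto simp: sector_def)
  have "p ^ 3 = rcis (cmod p ^ 3) (real 3 * Arg p)" by (metis DeMoivre2 rcis_cmod_Arg)
  hence r: "Re (p ^ 3) = cmod p ^ 3 * cos (3 * Arg p)" by (simp add: rcis_def)
  have "cos \<bar>3 * Arg p\<bar> \<ge> cos (3 * \<phi>)" using a assms by (intro cos_monotone_0_pi_le) auto
  hence "cos (3 * Arg p) \<ge> cos (3 * \<phi>)" by simp
  thus ?thesis unfolding r by (simp add: mult.commute mult_left_mono)
qed


theorem lemma17:
  fixes \<phi> :: real
  assumes "0 < \<phi>" "\<phi> < pi / 6"
  shows "\<exists>C::real. \<forall>T \<rho>0 \<phi>' c (b :: complex \<Rightarrow> real \<Rightarrow> complex) \<alpha> A F h (j::nat) \<nu> p t.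
     T > 0 \<longrightarrow> \<rho>0 > 0 \<longrightarrow> \<phi> < \<phi>' \<longrightarrow> \<phi>' < pi / 6 \<longrightarrow> c * cos \<phi>' > \<rho>0 \<longrightarrow>
     (\<forall>t\<in>{0..T}. (\<lambda>y. b y t) holomorphic_on bdom \<rho>0) \<longrightarrow>
     \<alpha> > 0 \<longrightarrow>
     (\<forall>t\<in>{0..T}. \<forall>y\<in>bdom \<rho>0. cmod (y powr of_real \<alpha> * b y t) < A) \<longrightarrow>
     F \<in> A_space \<phi> T \<nu> \<longrightarrow> h \<in> A_space \<phi> T \<nu> \<longrightarrow>
     j \<le> 3 \<longrightarrow> \<nu> > 2 * \<rho>0 + 1 \<longrightarrow>
     p \<in> sector \<phi> \<longrightarrow> 0 \<le> t \<longrightarrow> t \<le> T \<longrightarrow>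
     ennreal (cmod (integral {0..t} (\<lambda>\<tau>.
         (lconv (\<lambda>s \<tau>. s ^ j * (F s \<tau> + h s \<tau>)) (Bfun b c \<phi>') p \<tau>
          - lconv (\<lambda>s \<tau>. s ^ j * F s \<tau>) (Bfun b c \<phi>') p \<tau>)
         * exp (- (p ^ 3) * of_real (t - \<tau>)))))
     \<le> ennreal (C * T powr ((3 - real j) / 3) * exp (\<nu> * cmod p) / (M0 * (1 + (cmod p)\<^sup>2)))
        * nnorm_e \<phi> T \<nu> (abs_conv (Bfun b c \<phi>') h)"
proof -
  define k where "k = cos (3 * \<phi>)"
  have k0: "k > 0" unfolding k_def using assms by (intro cos_gt_zero_pi) auto
  have k1: "k \<le> 1" unfolding k_def by simp
  show ?thesis
  proof (rule exI[of _ "1 / k"], intro allI impI)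
    fix T \<rho>0 \<phi>' c and b :: "complex \<Rightarrow> real \<Rightarrow> complex" and \<alpha> A F h and j :: nat and \<nu> p t
    assume T0: "T > 0" and r0: "\<rho>0 > 0" and ph1: "\<phi> < \<phi>'" and ph2: "\<phi>' < pi / 6"
      and cc: "c * cos \<phi>' > \<rho>0"
      and hol: "\<forall>t\<in>{0..T}. (\<lambda>y. b y t) holomorphic_on bdom \<rho>0"
      and "\<alpha> > 0" and "\<forall>t\<in>{0..T}. \<forall>y\<in>bdom \<rho>0. cmod (y powr of_real \<alpha> * b y t) < A"
      and FA: "F \<in> A_space \<phi> T \<nu>" and hA: "h \<in> A_space \<phi> T \<nu>"
      and j3: "j \<le> 3" and "\<nu> > 2 * \<rho>0 + 1"
      and ps: "p \<in> sector \<phi>" and t0: "0 \<le> t" and tT: "t \<le> T"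
    define B where "B = Bfun b c \<phi>'"
    define N where "N = nnorm_e \<phi> T \<nu> (abs_conv B h)"
    define Fa where "Fa = 1 / k * T powr ((3 - real j) / 3) * exp (\<nu> * cmod p) / (M0 * (1 + (cmod p)\<^sup>2))"
    have p0: "p \<noteq> 0" using ps by (simp add: sector_def)
    have M0p: "M0 > 0" by (rule M0_pos)
    have Fa0: "Fa > 0" unfolding Fa_def using k0 T0 M0p by (simp add: add_pos_nonneg)
    have fin: "ennreal (cmod (integral {0..t} (\<lambda>\<tau>.
         (lconv (\<lambda>s \<tau>. s ^ j * (F s \<tau> + h s \<tau>)) B p \<tau>
          - lconv (\<lambda>s \<tau>. s ^ j * F s \<tau>) B p \<tau>)
         * exp (- (p ^ 3) * of_real (t - \<tau>))))) \<le> ennreal Fa * N"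
    proof (cases "N = top")
      case True
      thus ?thesis using Fa0 by (simp add: ennreal_mult_top)
    next
      case False
      then obtain NR where NR: "N = ennreal NR" "NR \<ge> 0" by (cases N) auto
      define Wt where "Wt = (1 + (cmod p)\<^sup>2) * exp (- \<nu> * cmod p)"
      have Wt0: "Wt > 0" unfolding Wt_def by (simp add: add_pos_nonneg)
      define K where "K = NR / (M0 * Wt)"
      have K0: "K \<ge> 0" unfolding K_def using NR M0p Wt0 by simp
      let ?D = "\<lambda>\<tau>. lconv (\<lambda>s \<tau>. s ^ j * (F s \<tau> + h s \<tau>)) B p \<tau> - lconv (\<lambda>s \<tau>. s ^ j * F s \<tau>) B p \<tau>"
      have Dbound: "cmod (?D \<tau>) \<le> K * cmod p ^ j" if \<tau>: "\<tau> \<in> {0..T}" for \<tau>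
      proof -
        have inK: "(p, \<tau>) \<in> Kset \<phi> T" using ps \<tau> closure_subset by (auto simp: Kset_def)
        have "ennreal Wt * abs_conv B h p \<tau>
              \<le> (SUP pt\<in>Kset \<phi> T. ennreal ((1 + (cmod (fst pt))\<^sup>2) * exp (- \<nu> * cmod (fst pt))) * abs_conv B h (fst pt) (snd pt))"
          using SUP_upper[OF inK, of "\<lambda>pt. ennreal ((1 + (cmod (fst pt))\<^sup>2) * exp (- \<nu> * cmod (fst pt))) * abs_conv B h (fst pt) (snd pt)"]
          by (simp add: Wt_def)
        hence le1: "ennreal M0 * (ennreal Wt * abs_conv B h p \<tau>) \<le> N"
          unfolding N_def nnorm_e_def by (rule mult_left_mono) simp
        have "abs_conv B h p \<tau> \<noteq> top"
        proof
          assume "abs_conv B h p \<tau> = top"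
          hence "ennreal M0 * (ennreal Wt * abs_conv B h p \<tau>) = top" using M0p Wt0 by (simp add: ennreal_mult_top)
          thus False using le1 False by (simp add: top_unique)
        qed
        then obtain a where a: "abs_conv B h p \<tau> = ennreal a" "a \<ge> 0" by (cases "abs_conv B h p \<tau>") auto
        have "ennreal (M0 * Wt * a) \<le> ennreal NR" using le1 a NR M0p Wt0 by (simp add: ennreal_mult mult.assoc)
        hence "M0 * Wt * a \<le> NR" using NR by (simp add: ennreal_le_iff)
        hence aK: "a \<le> K" unfolding K_def using M0p Wt0 by (simp add: field_simps mult.commute)
        have hc: "continuous_on (closed_segment 0 p) (\<lambda>s. h s \<tau>)"
          using hA \<tau> seg_in_closure_sector[OF ps] by (auto simp: A_space_def intro: continuous_on_subset)
        have bm: "(\<lambda>q. B q \<tau>) \<in> borel_measurable borel"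
          unfolding B_def using hol \<tau> r0 ph1 ph2 cc assms(1)
          by (intro Bfun_meas[of b \<tau> \<rho>0 \<phi>' c]) auto
        have "ennreal (cmod (?D \<tau>)) \<le> ennreal (cmod p ^ j) * abs_conv B h p \<tau>"
          unfolding lconv_def abs_conv_def
          using pw_diff[OF p0 hc bm, of j "\<lambda>s. F s \<tau>"] by simp
        also have "\<dots> = ennreal (cmod p ^ j * a)" using a by (simp add: ennreal_mult)
        finally have "cmod (?D \<tau>) \<le> cmod p ^ j * a" using a by (simp add: ennreal_le_iff)
        also have "\<dots> \<le> cmod p ^ j * K" using aK by (intro mult_left_mono) auto
        finally show ?thesis by (simp add: mult.commute)
      qed
      define aa where "aa = k * cmod p ^ 3"
      have aa0: "aa > 0" unfolding aa_def using k0 p0 by simp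
      let ?g = "\<lambda>\<tau>. K * cmod p ^ j * exp (- aa * (t - \<tau>))"
      have gint: "(?g has_integral (K * cmod p ^ j * ((1 - exp (- aa * t)) / aa))) {0..t}"
        by (intro has_integral_mult_right exp_integral aa0 t0)
      have ptw: "norm (?D \<tau> * exp (- (p ^ 3) * of_real (t - \<tau>))) \<le> ?g \<tau>" if "\<tau> \<in> {0..t}" for \<tau>
      proof -
        have tau: "\<tau> \<in> {0..T}" "t - \<tau> \<ge> 0" using that tT by auto
        have "Re (p ^ 3) \<ge> aa" unfolding aa_def k_def using Re_cube_bound[OF ps assms] .
        hence "Re (p^3) * (t - \<tau>) \<ge> aa * (t - \<tau>)" using tau by (intro mult_right_mono) auto
        hence e: "norm (exp (- (p ^ 3) * of_real (t - \<tau>))) \<le> exp (- aa * (t - \<tau>))"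
          by (simp add: norm_exp_eq_Re)
        have "norm (?D \<tau> * exp (- (p ^ 3) * of_real (t - \<tau>))) = cmod (?D \<tau>) * norm (exp (- (p ^ 3) * of_real (t - \<tau>)))"
          by (simp add: norm_mult)
        also have "\<dots> \<le> (K * cmod p ^ j) * exp (- aa * (t - \<tau>))"
          using Dbound[OF tau(1)] e K0 by (intro mult_mono) auto
        finally show ?thesis .
      qed
      have main: "cmod (integral {0..t} (\<lambda>\<tau>. ?D \<tau> * exp (- (p ^ 3) * of_real (t - \<tau>)))) \<le> K * (T powr ((3 - real j) / 3) / k)"
      proof (cases "(\<lambda>\<tau>. ?D \<tau> * exp (- (p ^ 3) * of_real (t - \<tau>))) integrable_on {0..t}")
        case True
        have "cmod (integral {0..t} (\<lambda>\<tau>. ?D \<tau> * exp (- (p ^ 3) * of_real (t - \<tau>)))) \<le> integral {0..t} ?g"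
          using True gint ptw by (intro integral_norm_bound_integral) (auto simp: has_integral_integrable)
        also have "\<dots> = K * (cmod p ^ j * ((1 - exp (- aa * t)) / aa))"
          using integral_unique[OF gint] by (simp only: mult.assoc)
        also have "\<dots> \<le> K * (T powr ((3 - real j) / 3) / k)"
          using time_factor[OF k0 k1 _ t0 tT j3, of "cmod p"] p0 K0
          by (intro mult_left_mono) (auto simp: aa_def)
        finally show ?thesis .
      next
        case False
        hence "integral {0..t} (\<lambda>\<tau>. ?D \<tau> * exp (- (p ^ 3) * of_real (t - \<tau>))) = 0"
          by (simp add: not_integrable_integral)
        thus ?thesis using K0 k0 by simp
      qed
      have eqK: "K * (T powr ((3 - real j) / 3) / k) = Fa * NR"
        unfolding K_def Fa_def Wt_def using M0p k0 by (simp add: exp_minus field_simps)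
      have "ennreal (cmod (integral {0..t} (\<lambda>\<tau>. ?D \<tau> * exp (- (p ^ 3) * of_real (t - \<tau>))))) \<le> ennreal (Fa * NR)"
        using main eqK by (simp add: ennreal_leI)
      thus ?thesis using NR Fa0 by (simp add: ennreal_mult)
    qed
    thus "ennreal (cmod (integral {0..t} (\<lambda>\<tau>.
         (lconv (\<lambda>s \<tau>. s ^ j * (F s \<tau> + h s \<tau>)) (Bfun b c \<phi>') p \<tau>
          - lconv (\<lambda>s \<tau>. s ^ j * F s \<tau>) (Bfun b c \<phi>') p \<tau>)
         * exp (- (p ^ 3) * of_real (t - \<tau>)))))
     \<le> ennreal (1 / k * T powr ((3 - real j) / 3) * exp (\<nu> * cmod p) / (M0 * (1 + (cmod p)\<^sup>2)))
        * nnorm_e \<phi> T \<nu> (abs_conv (Bfun b c \<phi>') h)"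
      unfolding Fa_def N_def B_def .
  qed
qed

end
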